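(* Let $n\ge 5$ be odd, $k=\frac{n-3}{2}$, $G=(V,E)=K_n$, and let $C=(v_1,\dots,v_{2k+1})$ be a cycle of length $n-2$ in $G$, with $s,t$ the two vertices of $G$ not on $C$. Then the $C$-induced constraint \[ x_{\{s,t\}}+k\cdot x(\delta(V(C)))+\sum_{e\in E[V\setminus\{s,t\}]}\ell(e)\,x_e\ \ge\ 2k+1 \] is valid for $P^{\uparrow}_{\mathrm{odd}}(G)$ and defines a facet of it.
   Context: $K_n$ is the complete graph on $n$ vertices. For a graph $G=(V,E)$, $P_{\mathrm{odd}}(G)=\operatorname{conv}\{\chi^D\colon D \text{ an odd cycle of } G\}$ and $P^{\uparrow}_{\mathrm{odd}}(G)=P_{\mathrm{odd}}(G)+\mathbb{R}^E_{\ge0}$. $\delta(V(C))$ is the set of edges with exactly one endpoint on $C$, $E[S]$ the set of edges with both endpoints in $S$, and $x(S)=\sum_{e\in S}x_e$. For $i\ne j$, $\ell(\{v_i,v_j\})=|j-i|$ if $|j-i|$ is odd and $\ell(\{v_i,v_j\})=2k+1-|j-i|$ otherwise (the length of the odd-length path on $C$ between $v_i$ and $v_j$). *)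

theory Defs
  imports "HOL-Analysis.Analysis"
begin

text \<open>We use the coordinate space real^('v set); only the coordinates indexed by 2-element
  sets (the edges of K_n) are ever nonzero in the polyhedra below, so affine dimensions
  and faces coincide with those in R^E.\<close>

definition Kn_edges :: "'v::finite set set" where
  "Kn_edges = {e. card e = 2}"

definition odd_cycles :: "'v::finite set set set" where
  "odd_cycles = { {{u i, u ((i + 1) mod m)} | i. i < m} | u m.
                   3 \<le> (m::nat) \<and> odd m \<and> inj_on u {..<m} }"

definition chi :: "'v::finite set set \<Rightarrow> real ^ ('v set)" where
  "chi D = (\<chi> e. if e \<in> D then 1 else 0)"

definition P_odd :: "(real ^ ('v::finite set)) set" where
  "P_odd = convex hull (chi ` odd_cycles)"

definition nonneg_edge_cone :: "(real ^ ('v::finite set)) set" where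
  "nonneg_edge_cone = {y. \<forall>e. 0 \<le> y $ e \<and> (e \<notin> (Kn_edges :: 'v set set) \<longrightarrow> y $ e = 0)}"

definition P_odd_up :: "(real ^ ('v::finite set)) set" where
  "P_odd_up = {a + b | a b. a \<in> P_odd \<and> b \<in> nonneg_edge_cone}"

text \<open>Length of the odd-length path on the cycle C = (v_1,...,v_(2k+1)) between v_i and v_j.\<close>
definition ell :: "nat \<Rightarrow> nat \<Rightarrow> nat \<Rightarrow> nat" where
  "ell k i j = (let d = (if i \<le> j then j - i else i - j) in
                 if odd d then d else 2 * k + 1 - d)"

definition C_lhs :: "nat \<Rightarrow> (nat \<Rightarrow> 'v::finite) \<Rightarrow> 'v \<Rightarrow> 'v \<Rightarrow> real ^ ('v set) \<Rightarrow> real" where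
  "C_lhs k v s t x =
     x $ {s, t}
     + real k * (\<Sum>e\<in>{e \<in> Kn_edges. card (e \<inter> v ` {1..2*k+1}) = 1}. x $ e)
     + (\<Sum>(i, j)\<in>{(i, j). 1 \<le> i \<and> i < j \<and> j \<le> 2*k+1}. real (ell k i j) * x $ {v i, v j})"

end

theory Submission
  imports Defs
begin


locale lsetup =
  fixes k :: nat and v :: "nat \<Rightarrow> 'v::finite" and s t :: 'v
  assumes card_v: "CARD('v) = 2*k+3" and k1: "k \<ge> 1"
    and inj_v: "inj_on v {1..2*k+1}"
    and s_notin: "s \<notin> v ` {1..2*k+1}" and t_notin: "t \<notin> v ` {1..2*k+1}" and st: "s \<noteq> t"
begin

definition lhs :: "real ^ ('v set) \<Rightarrow> real" where "lhs x = C_lhs k v s t x"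
definition E :: "'v set \<Rightarrow> real ^ ('v set)" where "E f = chi {f}"
definition w :: "'v set \<Rightarrow> real" where "w e = lhs (E e)"
definition wv :: "real ^ ('v set)" where "wv = (\<chi> e. w e)"

lemma E_nth: "E f $ e = (if e = f then 1 else 0)"
  by (simp add: E_def chi_def)

lemma lhs_add: "lhs (x + y) = lhs x + lhs y"
  unfolding lhs_def C_lhs_def by (simp add: sum.distrib algebra_simps case_prod_beta)

lemma lhs_scale: "lhs (c *\<^sub>R x) = c * lhs x"
  unfolding lhs_def C_lhs_def by (simp add: sum_distrib_left algebra_simps case_prod_beta)

lemma linear_lhs: "linear lhs"
  by (rule linearI) (simp_all add: lhs_add lhs_scale)

lemma vec_decomp: "x = (\<Sum>e\<in>UNIV. x $ e *\<^sub>R E e)"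
  by (simp add: vec_eq_iff sum_component E_nth if_distrib cong: if_cong)

lemma lhs_inner: "lhs x = wv \<bullet> x"
proof -
  have "lhs x = (\<Sum>e\<in>UNIV. x $ e * w e)"
    by (subst vec_decomp) (simp add: linear_sum[OF linear_lhs] lhs_scale w_def)
  then show ?thesis by (simp add: inner_vec_def wv_def mult.commute)
qed

abbreviation "N \<equiv> 2*k+1"
abbreviation "VC \<equiv> v ` {1..2*k+1}"
definition "Dl = {e \<in> (Kn_edges :: 'v set set). card (e \<inter> v ` {1..2*k+1}) = 1}"
definition "PP = {(i, j). 1 \<le> i \<and> i < j \<and> j \<le> 2*k+1}"

lemma finite_PP: "finite PP"
  by (rule finite_subset[of _ "{1..2*k+1} \<times> {1..2*k+1}"]) (auto simp: PP_def)

lemma w_formula: "w e = (if e = {s,t} then 1 else 0) + real k * (if e \<in> Dl then 1 else 0)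
   + (\<Sum>(i,j)\<in>PP. if e = {v i, v j} then real (ell k i j) else 0)"
proof -
  have "w e = E e $ {s,t} + real k * (\<Sum>e'\<in>Dl. E e $ e') + (\<Sum>(i,j)\<in>PP. real (ell k i j) * E e $ {v i, v j})"
    unfolding w_def lhs_def C_lhs_def Dl_def PP_def by simp
  also have "(\<Sum>e'\<in>Dl. E e $ e') = (if e \<in> Dl then 1 else 0)"
    by (simp add: E_nth eq_commute[of _ e] Dl_def)
  also have "(\<Sum>(i,j)\<in>PP. real (ell k i j) * E e $ {v i, v j}) = (\<Sum>(i,j)\<in>PP. if e = {v i, v j} then real (ell k i j) else 0)"
    by (rule sum.cong) (auto simp: E_nth)
  finally show ?thesis by (simp add: E_nth eq_commute[of "{s,t}"])
qed

lemma UNIV_eq: "(UNIV :: 'v set) = insert s (insert t VC)"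
proof -
  have "card (insert s (insert t VC)) = 2*k+3"
    using s_notin t_notin st card_image[OF inj_v] by simp
  then show ?thesis using card_v card_subset_eq[of UNIV "insert s (insert t VC)"]
    by simp
qed

lemma vert_cases:
  obtains "x = s" | "x = t" | i where "i \<in> {1..2*k+1}" "x = v i"
  using UNIV_eq by blast

lemma v_neq_s: "1 \<le> i \<Longrightarrow> i \<le> 2*k+1 \<Longrightarrow> v i \<noteq> s" using s_notin by fastforce
lemma v_neq_t: "1 \<le> i \<Longrightarrow> i \<le> 2*k+1 \<Longrightarrow> v i \<noteq> t" using t_notin by fastforce
lemma s_neq_v: "1 \<le> i \<Longrightarrow> i \<le> 2*k+1 \<Longrightarrow> s \<noteq> v i" using s_notin by fastforce
lemma t_neq_v: "1 \<le> i \<Longrightarrow> i \<le> 2*k+1 \<Longrightarrow> t \<noteq> v i" using t_notin by fastforce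
lemma v_eq_iff: "i \<in> {1..2*k+1} \<Longrightarrow> j \<in> {1..2*k+1} \<Longrightarrow> v i = v j \<longleftrightarrow> i = j"
  using inj_v by (auto dest: inj_onD)

lemma ell_sym: "ell k i j = ell k j i"
  by (simp add: ell_def Let_def)

lemma ell_pos: "i \<noteq> j \<Longrightarrow> i \<in> {1..2*k+1} \<Longrightarrow> j \<in> {1..2*k+1} \<Longrightarrow> ell k i j \<ge> 1"
  by (auto simp: ell_def Let_def)

lemma w_st: "w {s,t} = 1"
proof -
  have "{s,t} \<notin> Dl" using s_notin t_notin by (auto simp: Dl_def)
  moreover have "(\<Sum>(i,j)\<in>PP. if {s,t} = {v i, v j} then real (ell k i j) else 0) = 0"
    by (rule sum.neutral) (auto simp: PP_def doubleton_eq_iff v_neq_s v_neq_t s_neq_v t_neq_v)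
  ultimately show ?thesis by (simp add: w_formula)
qed

lemma w_sv: assumes "a \<in> {1..2*k+1}" shows "w {s, v a} = k" "w {t, v a} = k"
proof -
  have "{s, v a} \<inter> VC = {v a}" "{t, v a} \<inter> VC = {v a}" using s_notin t_notin assms by auto
  then have "{s, v a} \<in> Dl" "{t, v a} \<in> Dl"
    using assms by (auto simp: Dl_def Kn_edges_def s_neq_v t_neq_v)
  moreover have "(\<Sum>(i,j)\<in>PP. if {s, v a} = {v i, v j} then real (ell k i j) else 0) = 0"
    by (rule sum.neutral) (auto simp: PP_def doubleton_eq_iff v_neq_s v_neq_t s_neq_v t_neq_v)
  moreover have "(\<Sum>(i,j)\<in>PP. if {t, v a} = {v i, v j} then real (ell k i j) else 0) = 0"
    by (rule sum.neutral) (auto simp: PP_def doubleton_eq_iff v_neq_s v_neq_t s_neq_v t_neq_v)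
  moreover have "{s, v a} \<noteq> {s,t}" "{t, v a} \<noteq> {s,t}" using assms v_neq_s v_neq_t st
    by (auto simp: doubleton_eq_iff)
  ultimately show "w {s, v a} = k" "w {t, v a} = k" by (simp_all add: w_formula)
qed

lemma w_vv: assumes "a \<in> {1..2*k+1}" "b \<in> {1..2*k+1}" "a \<noteq> b"
  shows "w {v a, v b} = ell k a b"
proof -
  have ne: "v a \<noteq> v b" using assms v_eq_iff by blast
  have "{v a, v b} \<inter> VC = {v a, v b}" using assms by auto
  then have "{v a, v b} \<notin> Dl"
    using assms ne by (auto simp: Dl_def)
  moreover have "{v a, v b} \<noteq> {s,t}" using assms v_neq_s v_neq_t by (auto simp: doubleton_eq_iff)
  moreover have "(\<Sum>(i,j)\<in>PP. if {v a, v b} = {v i, v j} then real (ell k i j) else 0) = ell k a b"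
  proof -
    let ?p = "(min a b, max a b)"
    have "(\<Sum>(i,j)\<in>PP. if {v a, v b} = {v i, v j} then real (ell k i j) else 0)
        = (\<Sum>p\<in>PP. if p = ?p then real (ell k a b) else 0)"
    proof (rule sum.cong)
      fix p assume "p \<in> PP"
      then obtain i j where p: "p = (i,j)" "1 \<le> i" "i < j" "j \<le> 2*k+1" by (auto simp: PP_def)
      have "{v a, v b} = {v i, v j} \<longleftrightarrow> (i, j) = ?p"
        using assms p v_eq_iff[of a i] v_eq_iff[of a j] v_eq_iff[of b i] v_eq_iff[of b j]
        by (auto simp: doubleton_eq_iff min_def max_def)
      then show "(case p of (i,j) \<Rightarrow> if {v a, v b} = {v i, v j} then real (ell k i j) else 0)
          = (if p = ?p then real (ell k a b) else 0)"
        using p by (auto simp: min_def max_def ell_sym)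
    qed simp
    also have "\<dots> = ell k a b" using assms finite_PP by (auto simp: PP_def min_def max_def)
    finally show ?thesis .
  qed
  ultimately show ?thesis by (simp add: w_formula)
qed

lemma w_nonneg: "w e \<ge> 0"
  unfolding w_formula by (intro add_nonneg_nonneg sum_nonneg) (auto split: prod.splits)

lemma w_nonedge: "e \<notin> Kn_edges \<Longrightarrow> w e = 0"
proof -
  assume e: "e \<notin> Kn_edges"
  have "e \<noteq> {s,t}" using e st by (auto simp: Kn_edges_def)
  moreover have "e \<notin> Dl" using e by (auto simp: Dl_def)
  moreover have "(\<Sum>(i,j)\<in>PP. if e = {v i, v j} then real (ell k i j) else 0) = 0"
    by (rule sum.neutral) (use e v_eq_iff in \<open>auto simp: PP_def Kn_edges_def\<close>)
  ultimately show ?thesis by (simp add: w_formula)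
qed

lemma w_ge1: assumes "e \<in> Kn_edges" shows "w e \<ge> 1"
proof -
  from assms obtain x y where e: "e = {x,y}" "x \<noteq> y" by (auto simp: Kn_edges_def card_2_iff)
  show ?thesis
  proof (rule vert_cases[of x]; rule vert_cases[of y])
    fix i j assume h: "i \<in> {1..2*k+1}" "j \<in> {1..2*k+1}" "x = v i" "y = v j"
    then have "i \<noteq> j" using e by auto
    then show ?thesis using e h w_vv[of i j] ell_pos[of i j] by auto
  qed (use e k1 st w_st w_sv in \<open>auto simp: insert_commute\<close>)
qed

end

lemma sum_rot: assumes "0 < (m::nat)" shows "(\<Sum>i<m. g (Suc i mod m)) = (\<Sum>i<m. g i)"
proof (rule sum.reindex_bij_witness[where i="\<lambda>j. (j + m - 1) mod m" and j="\<lambda>i. Suc i mod m"])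
  fix a assume a: "a \<in> {..<m}"
  show "(Suc a mod m + m - 1) mod m = a"
  proof (cases "Suc a = m")
    case True
    then show ?thesis by simp
  next
    case False
    then have "Suc a mod m = Suc a" using a by simp
    then show ?thesis using a by simp
  qed
next
  fix a assume a: "a \<in> {..<m}"
  show "Suc ((a + m - 1) mod m) mod m = a"
  proof (cases "a = 0")
    case False
    then have "a + m - 1 = (a - 1) + m" using assms by simp
    moreover have "(a - 1 + m) mod m = a - 1" using a by simp
    ultimately have "(a + m - 1) mod m = a - 1" by metis
    then show ?thesis using False a by simp
  next
    case True
    then have "(a + m - 1) mod m = m - 1" using assms by simp
    then show ?thesis using True assms by simp
  qed
next
  fix a assume a: "a \<in> {..<m}"
  show "Suc a mod m \<in> {..<m}" using assms by simp
  show "(a + m - 1) mod m \<in> {..<m}" using assms by simp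
qed simp

lemma exists_switch:
  fixes P :: "nat \<Rightarrow> bool"
  assumes "i < m" "P i" "j < m" "\<not> P j"
  shows "\<exists>l<m. P l \<and> \<not> P (Suc l mod m)"
proof (rule ccontr)
  assume "\<not> ?thesis"
  then have step: "\<And>l. l < m \<Longrightarrow> P l \<Longrightarrow> P (Suc l mod m)" by blast
  have "P ((i + n) mod m)" for n
  proof (induction n)
    case 0 then show ?case using assms by simp
  next
    case (Suc n)
    have "(i + Suc n) mod m = Suc ((i + n) mod m) mod m" by (simp add: mod_Suc_eq)
    moreover have "(i + n) mod m < m" using assms(1) by simp
    ultimately show ?case using step Suc by metis
  qed
  from this[of "j + m - i"] have "P ((j + m) mod m)" using assms by simp
  then show False using assms by simp
qed


context lsetup begin

lemma chi_sum: "chi D = (\<Sum>e\<in>D. E e)"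
  by (simp add: vec_eq_iff sum_component E_nth chi_def)

lemma lhs_chi: "lhs (chi D) = (\<Sum>e\<in>D. w e)"
  by (simp add: chi_sum linear_sum[OF linear_lhs] w_def)

definition sg :: "nat \<Rightarrow> nat \<Rightarrow> int" where
  "sg a b = (let d = int b - int a in if odd d then d else if d > 0 then d - int (2*k+1) else d + int (2*k+1))"

lemma sg_props:
  assumes "a \<in> {1..2*k+1}" "b \<in> {1..2*k+1}" "a \<noteq> b"
  shows "\<bar>sg a b\<bar> = int (ell k a b)" "int (2*k+1) dvd (sg a b - (int b - int a))" "odd (sg a b)"
proof -
  have "sg a b - (int b - int a) \<in> {0, - int (2*k+1), int (2*k+1)}"
    by (simp add: sg_def Let_def)
  then show "int (2*k+1) dvd (sg a b - (int b - int a))"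
    by (elim insertE emptyE) (metis dvd_0_right dvd_refl dvd_minus_iff)+
  show "odd (sg a b)"
    by (auto simp: sg_def Let_def)
  show "\<bar>sg a b\<bar> = int (ell k a b)" 
  proof (cases "a \<le> b")
    case True
    then show ?thesis using assms
      by (auto simp: sg_def Let_def ell_def of_nat_diff even_diff)
  next
    case False
    then show ?thesis using assms
      by (auto simp: sg_def Let_def ell_def of_nat_diff even_diff)
  qed
qed

end

lemma mod_twice_ne: assumes "3 \<le> (m::nat)" "i < m" shows "Suc (Suc i mod m) mod m \<noteq> i"
proof (cases "Suc i = m")
  case True
  then have "Suc i mod m = 0" by simp
  then show ?thesis using True assms by simp
next
  case False
  then have a: "Suc i mod m = Suc i" using assms by simp
  show ?thesis
  proof (cases "Suc (Suc i) = m")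
    case True then show ?thesis using a assms by simp
  next
    case False
    then have "Suc (Suc i) mod m = Suc (Suc i)" using assms a \<open>Suc i \<noteq> m\<close> by simp
    then show ?thesis using a by simp
  qed
qed

lemma mod_suc_ne: assumes "2 \<le> (m::nat)" "i < m" shows "Suc i mod m \<noteq> i"
  using assms by (cases "Suc i = m") auto

lemma odd_cycles_obtain:
  assumes "D \<in> odd_cycles"
  obtains u and m :: nat where "3 \<le> m" "odd m" "inj_on u {..<m}" "D = (\<lambda>i. {u i, u (Suc i mod m)}) ` {..<m}"
proof -
  from assms obtain u and m :: nat where "3 \<le> m" "odd m" "inj_on u {..<m}"
     "D = {{u i, u ((i + 1) mod m)} | i. i < m}" by (auto simp: odd_cycles_def)
  moreover have "{{u i, u ((i + 1) mod m)} | i. i < m} = (\<lambda>i. {u i, u (Suc i mod m)}) ` {..<m}" by auto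
  ultimately show ?thesis using that by simp
qed

lemma ed_inj:
  assumes "3 \<le> m" "inj_on u {..<m}"
  shows "inj_on (\<lambda>i. {u i, u (Suc i mod m)}) {..<m}"
proof (rule inj_onI)
  fix i j assume ij: "i \<in> {..<m}" "j \<in> {..<m}" and eq: "{u i, u (Suc i mod m)} = {u j, u (Suc j mod m)}"
  have m: "Suc i mod m < m" "Suc j mod m < m" using assms by auto
  from eq consider "u i = u j" | "u i = u (Suc j mod m)" "u (Suc i mod m) = u j"
    by (auto simp: doubleton_eq_iff)
  then show "i = j"
  proof cases
    case 1 then show ?thesis using assms(2) ij by (auto dest: inj_onD)
  next
    case 2
    then have "i = Suc j mod m" "Suc i mod m = j" using assms(2) ij m by (auto dest: inj_onD)
    then show ?thesis using mod_twice_ne[OF assms(1), of i] ij by simp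
  qed
qed

lemma ed_edge:
  assumes "3 \<le> m" "inj_on u {..<m}" "i < m"
  shows "{u i, u (Suc i mod m)} \<in> Kn_edges"
proof -
  have "u i \<noteq> u (Suc i mod m)"
    using assms mod_suc_ne[of m i] by (auto dest: inj_onD)
  then show ?thesis by (simp add: Kn_edges_def)
qed


context lsetup begin

lemma valid_cycle:
  assumes "D \<in> odd_cycles"
  shows "lhs (chi D) \<ge> real (2*k+1)"
proof -
  obtain u and m :: nat where m3: "3 \<le> m" and modd: "odd m" and inju: "inj_on u {..<m}"
    and D: "D = (\<lambda>i. {u i, u (Suc i mod m)}) ` {..<m}"
    by (rule odd_cycles_obtain[OF assms])
  define ed where "ed = (\<lambda>i. {u i, u (Suc i mod m)})"
  have lhsD: "lhs (chi D) = (\<Sum>i<m. w (ed i))"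
    unfolding lhs_chi D ed_def by (rule sum.reindex_cong[OF ed_inj[OF m3 inju]]) simp_all
  have edK: "\<And>i. i < m \<Longrightarrow> ed i \<in> Kn_edges" unfolding ed_def using ed_edge[OF m3 inju] by blast
  show ?thesis
  proof (cases "\<exists>i<m. u i \<in> {s,t}")
    case True
    then obtain i1 where i1: "i1 < m" "u i1 \<in> {s,t}" by blast
    have "\<exists>j<m. u j \<notin> {s,t}"
    proof (rule ccontr)
      assume "\<not> ?thesis"
      then have "u ` {..<m} \<subseteq> {s,t}" by auto
      then have "card (u ` {..<m}) \<le> card {s,t}" by (intro card_mono) auto
      also have "\<dots> \<le> 2" by (simp add: card_insert_if)
      finally show False using card_image[OF inju] m3 by simp
    qed
    then obtain j1 where j1: "j1 < m" "u j1 \<notin> {s,t}" by blast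
    obtain i0 where i0: "i0 < m" "u i0 \<in> {s,t}" "u (Suc i0 mod m) \<notin> {s,t}"
      using exists_switch[of i1 m "\<lambda>l. u l \<in> {s,t}" j1] i1 j1 by blast
    obtain j0 where j0: "j0 < m" "u j0 \<notin> {s,t}" "u (Suc j0 mod m) \<in> {s,t}"
      using exists_switch[of j1 m "\<lambda>l. u l \<notin> {s,t}" i1] i1 j1 by blast
    have wk: "w {x, y} = k" if hx: "x \<in> {s,t}" and hy: "y \<notin> {s,t}" for x y
    proof -
      obtain a where "a \<in> {1..2*k+1}" "y = v a" using vert_cases[of y] hy by blast
      then show ?thesis using hx w_sv by auto
    qed
    have w0: "w (ed i0) = k" unfolding ed_def using wk i0 by simp
    have w1: "w (ed j0) = k" unfolding ed_def using wk[of "u (Suc j0 mod m)" "u j0"] j0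
      by (simp add: insert_commute)
    have ij: "i0 \<noteq> j0" using i0 j0 by auto
    have "card ({..<m} - {i0, j0}) \<ge> 1"
      using card_Diff_subset[of "{i0,j0}" "{..<m}"] i0 j0 m3 ij by auto
    then obtain l where l: "l \<in> {..<m} - {i0, j0}"
      by (metis all_not_in_conv card.empty not_one_le_zero)
    have "(\<Sum>i\<in>{i0, j0, l}. w (ed i)) \<le> (\<Sum>i<m. w (ed i))"
      by (rule sum_mono2) (use i0 j0 l w_nonneg in auto)
    moreover have "(\<Sum>i\<in>{i0, j0, l}. w (ed i)) = k + k + w (ed l)"
      using ij l w0 w1 by simp
    moreover have "w (ed l) \<ge> 1" using w_ge1 edK l by auto
    ultimately show ?thesis using lhsD by simp
  next
    case False
    then have inVC: "\<And>i. i < m \<Longrightarrow> u i \<in> VC" using vert_cases by blast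
    define p where "p i = (SOME a. a \<in> {1..2*k+1} \<and> u i = v a)" for i
    have p: "p i \<in> {1..2*k+1}" "u i = v (p i)" if "i < m" for i
    proof -
      have "\<exists>a. a \<in> {1..2*k+1} \<and> u i = v a" using inVC[OF that] by blast
      then have "p i \<in> {1..2*k+1} \<and> u i = v (p i)" unfolding p_def by (rule someI_ex)
      then show "p i \<in> {1..2*k+1}" "u i = v (p i)" by auto
    qed
    define q where "q i = p (Suc i mod m)" for i
    have q: "q i \<in> {1..2*k+1}" "u (Suc i mod m) = v (q i)" if "i < m" for i
      using p[of "Suc i mod m"] m3 that unfolding q_def by auto
    have pq: "p i \<noteq> q i" if "i < m" for i
    proof
      assume "p i = q i"
      then have "u i = u (Suc i mod m)" using p q that by simp
      then show False using inju that m3 mod_suc_ne[of m i] by (auto dest: inj_onD)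
    qed
    define g where "g i = sg (p i) (q i)" for i
    have wg: "w (ed i) = real_of_int \<bar>g i\<bar>" if "i < m" for i
      using w_vv[OF p(1)[OF that] q(1)[OF that] pq[OF that]] sg_props(1)[OF p(1)[OF that] q(1)[OF that] pq[OF that]]
        p(2)[OF that] q(2)[OF that] unfolding ed_def g_def by simp
    define S where "S = (\<Sum>i<m. g i)"
    have tel: "(\<Sum>i<m. int (q i) - int (p i)) = 0"
      using sum_rot[of m "\<lambda>i. int (p i)"] m3 by (simp add: q_def sum_subtractf)
    have "int (2*k+1) dvd (\<Sum>i<m. g i - (int (q i) - int (p i)))"
      by (rule dvd_sum) (use sg_props(2) p q pq in \<open>auto simp: g_def\<close>)
    then have dvdS: "int (2*k+1) dvd S" using tel by (simp add: S_def sum_subtractf)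
    have "2 dvd (\<Sum>i<m. g i - 1)"
      by (rule dvd_sum) (use sg_props(3) p q pq in \<open>auto simp: g_def\<close>)
    then have "2 dvd (S - int m)" by (simp add: S_def sum_subtractf)
    then have oddS: "odd S" using modd by (metis dvd_add_right_iff diff_add_cancel even_of_nat)
    from dvdS obtain c where c: "S = int (2*k+1) * c" by (auto elim: dvdE)
    have "c \<noteq> 0" using oddS c by auto
    then have "\<bar>S\<bar> \<ge> int (2*k+1)" using c by (simp add: abs_mult)
    also have "\<bar>S\<bar> \<le> (\<Sum>i<m. \<bar>g i\<bar>)" unfolding S_def by (rule sum_abs)
    finally have "real_of_int (int (2*k+1)) \<le> real_of_int (\<Sum>i<m. \<bar>g i\<bar>)" by linarith
    then show ?thesis using lhsD wg by simp
  qed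
qed

end

lemma triangle_cycle:
  assumes "a \<noteq> b" "b \<noteq> c" "a \<noteq> c"
  shows "{{a,b},{b,c},{a,c}} \<in> odd_cycles"
proof -
  define u where "u i = (if i = 0 then a else if i = Suc 0 then b else c)" for i :: nat
  have e1: "{{u i, u ((i + 1) mod 3)} | i. i < (3::nat)} = (\<lambda>i. {u i, u ((i + 1) mod 3)}) ` {..<3}"
    by blast
  have e2: "{..<(3::nat)} = {0, 1, 2}" by auto
  have e3: "(\<lambda>i. {u i, u ((i + 1) mod 3)}) ` {0,1,2::nat} = {{a,b},{b,c},{a,c}}"
    by (simp add: u_def insert_commute)
  have inj: "inj_on u {..<3}" using assms unfolding e2
    by (auto simp: inj_on_def u_def)
  have o3: "odd (3::nat)" "3 \<le> (3::nat)" by auto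
  have "{{a,b},{b,c},{a,c}} = {{u i, u ((i + 1) mod 3)} | i. i < (3::nat)}"
    using e1 e2 e3 by simp
  then show ?thesis unfolding odd_cycles_def using inj o3 by blast
qed

context lsetup begin

lemma convex_P: "convex (P_odd_up :: (real ^ ('v set)) set)"
proof -
  have c1: "convex (P_odd :: (real ^ ('v set)) set)" unfolding P_odd_def by (rule convex_convex_hull)
  have c2: "convex (nonneg_edge_cone :: (real ^ ('v set)) set)"
    unfolding nonneg_edge_cone_def convex_def by (auto simp: add_nonneg_nonneg)
  show ?thesis unfolding convex_def P_odd_up_def
  proof (clarify)
    fix a b a' b' :: "real ^ ('v set)" and u v' :: real
    assume h: "a \<in> P_odd" "b \<in> nonneg_edge_cone" "a' \<in> P_odd" "b' \<in> nonneg_edge_cone"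
      "0 \<le> u" "0 \<le> v'" "u + v' = 1"
    have "u *\<^sub>R (a + b) + v' *\<^sub>R (a' + b') = (u *\<^sub>R a + v' *\<^sub>R a') + (u *\<^sub>R b + v' *\<^sub>R b')"
      by (simp add: algebra_simps)
    moreover have "u *\<^sub>R a + v' *\<^sub>R a' \<in> P_odd" using c1 h unfolding convex_def by blast
    moreover have "u *\<^sub>R b + v' *\<^sub>R b' \<in> nonneg_edge_cone" using c2 h unfolding convex_def by blast
    ultimately show "\<exists>a'' b''. u *\<^sub>R (a + b) + v' *\<^sub>R (a' + b') = a'' + b'' \<and> a'' \<in> P_odd \<and> b'' \<in> nonneg_edge_cone"
      by blast
  qed
qed

lemma wv_nonneg: "wv $ e \<ge> 0" by (simp add: wv_def w_nonneg)

lemma valid_up: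
  assumes "x \<in> P_odd_up"
  shows "wv \<bullet> x \<ge> real (2*k+1)"
proof -
  obtain a b where x: "x = a + b" and a: "a \<in> P_odd" and b: "b \<in> nonneg_edge_cone"
    using assms unfolding P_odd_up_def by blast
  have "chi ` odd_cycles \<subseteq> {y. wv \<bullet> y \<ge> real (2*k+1)}"
    using valid_cycle by (auto simp: lhs_inner)
  then have "P_odd \<subseteq> {y. wv \<bullet> y \<ge> real (2*k+1)}"
    unfolding P_odd_def by (intro hull_minimal) (auto simp: convex_halfspace_ge)
  then have "wv \<bullet> a \<ge> real (2*k+1)" using a by auto
  moreover have "wv \<bullet> b \<ge> 0"
    using b wv_nonneg unfolding nonneg_edge_cone_def inner_vec_def by (auto intro!: sum_nonneg)
  ultimately show ?thesis by (simp add: x inner_add_right)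
qed

definition "L = {y :: real ^ ('v set). \<forall>e. e \<notin> Kn_edges \<longrightarrow> y $ e = 0}"

lemma subspace_L: "subspace L"
  unfolding subspace_def L_def by auto

lemma chi_in_L: "D \<in> odd_cycles \<Longrightarrow> chi D \<in> L"
proof -
  assume "D \<in> odd_cycles"
  then obtain u and m :: nat where m3: "3 \<le> m" and inju: "inj_on u {..<m}"
    and D: "D = (\<lambda>i. {u i, u (Suc i mod m)}) ` {..<m}"
    by (rule odd_cycles_obtain)
  then have "D \<subseteq> Kn_edges" using ed_edge by auto
  then show ?thesis by (auto simp: L_def chi_def)
qed

lemma P_sub_L: "P_odd_up \<subseteq> L"
proof -
  have "P_odd \<subseteq> L" unfolding P_odd_def
    by (rule hull_minimal) (use chi_in_L subspace_imp_convex[OF subspace_L] in auto)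
  moreover have "nonneg_edge_cone \<subseteq> L" by (auto simp: nonneg_edge_cone_def L_def)
  ultimately show ?thesis unfolding P_odd_up_def using subspace_add[OF subspace_L] by blast
qed

lemma chi_in_P: "D \<in> odd_cycles \<Longrightarrow> chi D \<in> P_odd_up"
  unfolding P_odd_up_def P_odd_def
  by (rule CollectI, rule exI[of _ "chi D"], rule exI[of _ 0])
     (auto simp: nonneg_edge_cone_def intro: hull_inc)

lemma chi_plus_in_P: "D \<in> odd_cycles \<Longrightarrow> f \<in> Kn_edges \<Longrightarrow> chi D + E f \<in> P_odd_up"
  unfolding P_odd_up_def P_odd_def
  by (rule CollectI, rule exI[of _ "chi D"], rule exI[of _ "E f"])
     (auto simp: nonneg_edge_cone_def E_nth intro: hull_inc)

definition "TV = chi ` {D \<in> odd_cycles. lhs (chi D) = real (2*k+1)}"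
definition "T0 = {{s,t},{t,v 1},{s,v 1}}"
definition "c0 = chi T0"
definition "Bsp = {y \<in> L. wv \<bullet> y = 0}"

lemma T0_cycle: "T0 \<in> odd_cycles"
  unfolding T0_def by (rule triangle_cycle) (use st s_neq_v[of 1] t_neq_v[of 1] in auto)

lemma lhs_tri: "a \<noteq> b \<Longrightarrow> b \<noteq> c \<Longrightarrow> a \<noteq> c \<Longrightarrow> lhs (chi {{a,b},{b,c},{a,c}}) = w {a,b} + w {b,c} + w {a,c}"
  by (simp add: lhs_chi doubleton_eq_iff)

lemma c0_TV: "c0 \<in> TV"
proof -
  have "lhs (chi T0) = w {s,t} + w {t, v 1} + w {s, v 1}"
    unfolding T0_def by (rule lhs_tri) (use st s_neq_v[of 1] t_neq_v[of 1] in auto)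
  also have "\<dots> = real (2*k+1)" using w_st w_sv[of 1] by simp
  finally show ?thesis unfolding TV_def c0_def using T0_cycle by auto
qed

end

context lsetup begin

definition "RR = span ((+) (- c0) ` TV)"

lemma TV_diff: "x \<in> TV \<Longrightarrow> y \<in> TV \<Longrightarrow> x - y \<in> RR"
proof -
  assume "x \<in> TV" "y \<in> TV"
  then have "- c0 + x \<in> RR" "- c0 + y \<in> RR" unfolding RR_def by (auto intro: span_base)
  then have "(- c0 + x) - (- c0 + y) \<in> RR" unfolding RR_def by (rule span_diff)
  then show ?thesis by simp
qed

lemma tri_TV:
  assumes "a \<noteq> b" "b \<noteq> c" "a \<noteq> c" "w {a,b} + w {b,c} + w {a,c} = real (2*k+1)"
  shows "E {a,b} + E {b,c} + E {a,c} \<in> TV"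
proof -
  have "chi {{a,b},{b,c},{a,c}} = E {a,b} + E {b,c} + E {a,c}"
    using assms by (simp add: chi_sum doubleton_eq_iff add.assoc)
  moreover have "{{a,b},{b,c},{a,c}} \<in> odd_cycles" using assms by (intro triangle_cycle)
  moreover have "lhs (chi {{a,b},{b,c},{a,c}}) = real (2*k+1)" using assms lhs_tri by simp
  ultimately show ?thesis unfolding TV_def by (metis (mono_tags, lifting) image_eqI mem_Collect_eq)
qed

lemma ell_adj: "1 \<le> j \<Longrightarrow> ell k j (Suc j) = 1"
  by (simp add: ell_def Let_def)

lemma arc_TV:
  assumes ab: "1 \<le> a" "a < b" "b \<le> 2*k+1" "even (b - a)"
  shows "E {v a, v b} + (\<Sum>j\<in>{a..<b}. E {v j, v (Suc j)}) \<in> TV"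
proof -
  define m where "m = b - a + 1"
  define u where "u i = v (a + i)" for i
  have "b - a \<ge> 2" using ab(2) ab(4) by presburger
  then have m3: "3 \<le> m" and modd: "odd m" using ab unfolding m_def by auto
  have inju: "inj_on u {..<m}"
    unfolding u_def m_def using ab by (auto simp: inj_on_def v_eq_iff)
  let ?f = "\<lambda>j. {v j, v (Suc j)}"
  have Deq: "{{u i, u ((i + 1) mod m)} | i. i < m} = insert {v a, v b} (?f ` {a..<b})"
  proof (intro equalityI subsetI)
    fix e assume "e \<in> {{u i, u ((i + 1) mod m)} | i. i < m}"
    then obtain i where i: "i < m" "e = {u i, u ((i + 1) mod m)}" by blast
    show "e \<in> insert {v a, v b} (?f ` {a..<b})"
    proof (cases "i = b - a")
      case True
      then have "(i + 1) mod m = 0" unfolding m_def by simp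
      then show ?thesis using i True ab by (auto simp: u_def insert_commute)
    next
      case False
      then have "i + 1 < m" using i unfolding m_def by simp
      then have "e = ?f (a + i)" using i by (simp add: u_def)
      moreover have "a + i \<in> {a..<b}" using False i unfolding m_def by auto
      ultimately show ?thesis by blast
    qed
  next
    fix e assume e: "e \<in> insert {v a, v b} (?f ` {a..<b})"
    show "e \<in> {{u i, u ((i + 1) mod m)} | i. i < m}"
    proof (cases "e = {v a, v b}")
      case True
      have "(b - a + 1) mod m = 0" unfolding m_def by simp
      then have "e = {u (b - a), u ((b - a + 1) mod m)}" using True ab by (simp add: u_def insert_commute)
      moreover have "b - a < m" unfolding m_def by simp
      ultimately show ?thesis by blast
    next
      case False
      have "e \<in> ?f ` {a..<b}" using e False by blast
      then obtain j where j: "j \<in> {a..<b}" "e = ?f j" by blast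
      have "(j - a + 1) mod m = j - a + 1" using j unfolding m_def by auto
      then have "e = {u (j - a), u ((j - a + 1) mod m)}" using j by (simp add: u_def)
      moreover have "j - a < m" using j unfolding m_def by auto
      ultimately show ?thesis by blast
    qed
  qed
  define D where "D = insert {v a, v b} (?f ` {a..<b})"
  have Dodd: "D \<in> odd_cycles" unfolding odd_cycles_def D_def using Deq[symmetric] m3 modd inju by blast
  have injf: "inj_on ?f {a..<b}"
    using ab by (auto simp: inj_on_def doubleton_eq_iff v_eq_iff)
  have notin: "{v a, v b} \<notin> ?f ` {a..<b}"
  proof
    assume "{v a, v b} \<in> ?f ` {a..<b}"
    then obtain j where j: "j \<in> {a..<b}" "{v a, v b} = {v j, v (Suc j)}" by blast
    then have "(a = j \<and> b = Suc j) \<or> (a = Suc j \<and> b = j)"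
      using ab by (auto simp: doubleton_eq_iff v_eq_iff)
    then show False using j ab by auto
  qed
  have chiD: "chi D = E {v a, v b} + (\<Sum>j\<in>{a..<b}. E {v j, v (Suc j)})"
    unfolding D_def chi_sum using notin injf by (simp add: sum.reindex)
  have "lhs (chi D) = w {v a, v b} + (\<Sum>j\<in>{a..<b}. w {v j, v (Suc j)})"
    unfolding D_def lhs_chi using notin injf by (simp add: sum.reindex)
  also have "(\<Sum>j\<in>{a..<b}. w {v j, v (Suc j)}) = (\<Sum>j\<in>{a..<b}. 1)"
    by (rule sum.cong) (use ab w_vv ell_adj in auto)
  also have "w {v a, v b} = real (ell k a b)" using ab w_vv by auto
  also have "ell k a b = 2*k+1 - (b - a)" using ab by (simp add: ell_def Let_def)
  finally have "lhs (chi D) = real (2*k+1)" using ab by simp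
  then show ?thesis using Dodd chiD unfolding TV_def by (metis (mono_tags, lifting) image_eqI mem_Collect_eq)
qed

end

lemma alt_span:
  fixes f :: "nat \<Rightarrow> 'a::real_vector"
  assumes step: "\<And>j. 1 \<le> j \<Longrightarrow> j < 2*k+1 \<Longrightarrow> f j + f (Suc j) \<in> span X"
    and last: "f (2*k+1) + f 1 \<in> span X"
    and i: "1 \<le> i" "i \<le> 2*k+1"
  shows "f i \<in> span X"
proof -
  have Q: "j \<le> 2*k \<Longrightarrow> f 1 - ((-1::real) ^ j) *\<^sub>R f (1 + j) \<in> span X" for j
  proof (induction j)
    case 0 then show ?case by (simp add: span_zero)
  next
    case (Suc j)
    then have IH: "f 1 - ((-1::real) ^ j) *\<^sub>R f (1 + j) \<in> span X" by simp
    have "f (1 + j) + f (Suc (1 + j)) \<in> span X" using Suc.prems by (intro step) auto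
    then have "((-1::real) ^ j) *\<^sub>R (f (1 + j) + f (Suc (1 + j))) \<in> span X" by (rule span_mul)
    then have "(f 1 - ((-1::real) ^ j) *\<^sub>R f (1 + j)) + ((-1::real) ^ j) *\<^sub>R (f (1 + j) + f (Suc (1 + j))) \<in> span X"
      using IH span_add by blast
    then show ?case by (simp add: algebra_simps)
  qed
  have "f 1 - f (2*k+1) \<in> span X" using Q[of "2*k"] by simp
  then have "(f 1 - f (2*k+1)) + (f (2*k+1) + f 1) \<in> span X" using last by (rule span_add)
  then have "(1/2::real) *\<^sub>R ((f 1 - f (2*k+1)) + (f (2*k+1) + f 1)) \<in> span X" by (rule span_mul)
  then have f1: "f 1 \<in> span X" by (simp add: algebra_simps scaleR_2[symmetric])
  have "f 1 - ((-1::real) ^ (i - 1)) *\<^sub>R f i \<in> span X" using Q[of "i - 1"] i by simp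
  then have "f 1 - (f 1 - ((-1::real) ^ (i - 1)) *\<^sub>R f i) \<in> span X" using f1 span_diff by blast
  then have "((-1::real) ^ (i - 1)) *\<^sub>R f i \<in> span X" by simp
  then have "((-1::real) ^ (i - 1)) *\<^sub>R (((-1::real) ^ (i - 1)) *\<^sub>R f i) \<in> span X"
    by (rule span_mul)
  moreover have "((-1::real) ^ (i - 1)) * ((-1::real) ^ (i - 1)) = 1"
    by (simp add: power_mult_distrib[symmetric])
  ultimately show ?thesis by (simp only: scaleR_scaleR scaleR_one)
qed


context lsetup begin

definition "nx i = (if i = 2*k+1 then 1 else Suc i)"
definition "zz = E {s,t}"
definition "AA i = E {s, v i}"
definition "BB i = E {t, v i}"
definition "CC i = E {v i, v (nx i)}"

lemma RR_add: "x \<in> RR \<Longrightarrow> y \<in> RR \<Longrightarrow> x + y \<in> RR" unfolding RR_def by (rule span_add)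
lemma RR_diff: "x \<in> RR \<Longrightarrow> y \<in> RR \<Longrightarrow> x - y \<in> RR" unfolding RR_def by (rule span_diff)
lemma RR_mul: "x \<in> RR \<Longrightarrow> c *\<^sub>R x \<in> RR" unfolding RR_def by (rule span_mul)
lemma RR_sum: "(\<And>i. i \<in> I \<Longrightarrow> f i \<in> RR) \<Longrightarrow> sum f I \<in> RR" unfolding RR_def by (rule span_sum)

lemma nx_range: "i \<in> {1..2*k+1} \<Longrightarrow> nx i \<in> {1..2*k+1}" by (auto simp: nx_def)
lemma nx_ne: "i \<in> {1..2*k+1} \<Longrightarrow> nx i \<noteq> i" using k1 by (auto simp: nx_def)
lemma nx_ne': "i \<in> {1..2*k+1} \<Longrightarrow> i \<noteq> nx i" using nx_ne by metis
lemma w_adj: "i \<in> {1..2*k+1} \<Longrightarrow> w {v i, v (nx i)} = 1"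
proof -
  assume i: "i \<in> {1..2*k+1}"
  have "w {v i, v (nx i)} = ell k i (nx i)" using w_vv[OF i nx_range[OF i] nx_ne'[OF i]] .
  also have "ell k i (nx i) = 1" using i by (auto simp: nx_def ell_def Let_def)
  finally show ?thesis by simp
qed

lemma T_TV: "i \<in> {1..2*k+1} \<Longrightarrow> zz + BB i + AA i \<in> TV"
  unfolding zz_def AA_def BB_def
  by (rule tri_TV) (use st s_neq_v t_neq_v w_st w_sv in auto)

lemma S_TV: "i \<in> {1..2*k+1} \<Longrightarrow> AA i + CC i + AA (nx i) \<in> TV"
  unfolding CC_def AA_def
  by (rule tri_TV) (use s_neq_v nx_range nx_ne nx_ne' v_eq_iff w_sv w_adj in auto)

lemma U_TV: "i \<in> {1..2*k+1} \<Longrightarrow> BB i + CC i + BB (nx i) \<in> TV"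
  unfolding CC_def BB_def
  by (rule tri_TV) (use t_neq_v nx_range nx_ne nx_ne' v_eq_iff w_sv w_adj in auto)

lemma d_RR: "i \<in> {1..2*k+1} \<Longrightarrow> AA i - BB i \<in> RR"
  unfolding RR_def
proof (rule alt_span[where k=k])
  fix j assume j: "1 \<le> j" "j < 2*k+1"
  then have "nx j = Suc j" by (simp add: nx_def)
  moreover have "(AA j + CC j + AA (nx j)) - (BB j + CC j + BB (nx j)) \<in> RR"
    using j by (intro TV_diff S_TV U_TV) auto
  ultimately show "AA j - BB j + (AA (Suc j) - BB (Suc j)) \<in> span ((+) (- c0) ` TV)"
    unfolding RR_def by (simp add: algebra_simps)
next
  have "nx (2*k+1) = 1" by (simp add: nx_def)
  moreover have "(AA (2*k+1) + CC (2*k+1) + AA (nx (2*k+1))) - (BB (2*k+1) + CC (2*k+1) + BB (nx (2*k+1))) \<in> RR"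
    by (intro TV_diff S_TV U_TV) auto
  ultimately show "AA (2*k+1) - BB (2*k+1) + (AA 1 - BB 1) \<in> span ((+) (- c0) ` TV)"
    unfolding RR_def by (simp add: algebra_simps)
qed auto

lemma a_RR: assumes i: "i \<in> {1..2*k+1}" shows "AA i - AA 1 \<in> RR"
proof -
  have X: "(zz + BB i + AA i) - (zz + BB 1 + AA 1) \<in> RR" using i by (intro TV_diff T_TV) auto
  have d1: "AA 1 - BB 1 \<in> RR" by (rule d_RR) auto
  have "((zz + BB i + AA i) - (zz + BB 1 + AA 1)) + (AA i - BB i) - (AA 1 - BB 1) \<in> RR"
    by (rule RR_diff[OF RR_add[OF X d_RR[OF i]] d1])
  then have "(1/2::real) *\<^sub>R (((zz + BB i + AA i) - (zz + BB 1 + AA 1)) + (AA i - BB i) - (AA 1 - BB 1)) \<in> RR"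
    by (rule RR_mul)
  moreover have "(1/2::real) *\<^sub>R (((zz + BB i + AA i) - (zz + BB 1 + AA 1)) + (AA i - BB i) - (AA 1 - BB 1)) = AA i - AA 1"
    by (simp add: algebra_simps scaleR_2[symmetric])
  ultimately show ?thesis by simp
qed

lemma c_RR: assumes i: "i \<in> {1..2*k+1}" shows "CC i - zz \<in> RR"
proof -
  have X: "(AA i + CC i + AA (nx i)) - (zz + BB i + AA i) \<in> RR" using i by (intro TV_diff T_TV S_TV) auto
  have "((AA i + CC i + AA (nx i)) - (zz + BB i + AA i)) - (AA (nx i) - AA 1) + (AA i - AA 1) - (AA i - BB i) \<in> RR"
    by (rule RR_diff[OF RR_add[OF RR_diff[OF X a_RR[OF nx_range[OF i]]] a_RR[OF i]] d_RR[OF i]])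
  moreover have "((AA i + CC i + AA (nx i)) - (zz + BB i + AA i)) - (AA (nx i) - AA 1) + (AA i - AA 1) - (AA i - BB i) = CC i - zz"
    by (simp add: algebra_simps)
  ultimately show ?thesis by simp
qed

definition "arcv a b = E {v a, v b} + (\<Sum>j\<in>{a..<b}. E {v j, v (Suc j)})"

lemma arc_full: "arcv 1 (2*k+1) = (\<Sum>j\<in>{1..2*k+1}. CC j)"
proof -
  have a: "E {v 1, v (2*k+1)} = CC (2*k+1)" by (simp add: CC_def nx_def insert_commute)
  have b: "(\<Sum>j\<in>{1..<2*k+1}. E {v j, v (Suc j)}) = (\<Sum>j\<in>{1..<2*k+1}. CC j)"
    by (rule sum.cong) (auto simp: CC_def nx_def)
  have h: "{1..2*k+1} = insert (2*k+1) {1..<2*k+1}" by auto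
  have fin: "finite {1..<2*k+1}" and nin: "2*k+1 \<notin> {1..<2*k+1}" by auto
  have "(\<Sum>j\<in>{1..2*k+1}. CC j) = CC (2*k+1) + (\<Sum>j\<in>{1..<2*k+1}. CC j)"
    unfolding h by (rule sum.insert[OF fin nin])
  then show ?thesis unfolding arcv_def a b by simp
qed

lemma arc_sum: "1 \<le> a \<Longrightarrow> b \<le> 2*k+1 \<Longrightarrow> (\<Sum>j\<in>{a..<b}. E {v j, v (Suc j)}) = (\<Sum>j\<in>{a..<b}. CC j)"
  by (rule sum.cong) (auto simp: CC_def nx_def)

lemma sumC_RR: "1 \<le> a \<Longrightarrow> b \<le> 2*k+1 \<Longrightarrow> (\<Sum>j\<in>{a..<b}. CC j) - real (b - a) *\<^sub>R zz \<in> RR"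
proof -
  assume ab: "1 \<le> a" "b \<le> 2*k+1"
  have "(\<Sum>j\<in>{a..<b}. CC j - zz) \<in> RR" using ab c_RR by (intro RR_sum) auto
  then show ?thesis by (simp add: sum_subtractf scaleR_conv_of_real)
qed

lemma sumC_full_RR: "(\<Sum>j\<in>{1..2*k+1}. CC j) - real (2*k+1) *\<^sub>R zz \<in> RR"
proof -
  have "(\<Sum>j\<in>{1..2*k+1}. CC j - zz) \<in> RR" using c_RR by (intro RR_sum) auto
  then show ?thesis by (simp add: sum_subtractf scaleR_conv_of_real)
qed

lemma a1_RR: "AA 1 - real k *\<^sub>R zz \<in> RR"
proof -
  have arcTV: "arcv 1 (2*k+1) \<in> TV" unfolding arcv_def by (rule arc_TV) (use k1 in auto)
  have X: "arcv 1 (2*k+1) - (zz + BB 1 + AA 1) \<in> RR" by (intro TV_diff arcTV T_TV) auto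
  have d1: "AA 1 - BB 1 \<in> RR" by (rule d_RR) auto
  have "((\<Sum>j\<in>{1..2*k+1}. CC j) - real (2*k+1) *\<^sub>R zz) + (AA 1 - BB 1) - (arcv 1 (2*k+1) - (zz + BB 1 + AA 1)) \<in> RR"
    by (rule RR_diff[OF RR_add[OF sumC_full_RR d1] X])
  then have "(1/2::real) *\<^sub>R (((\<Sum>j\<in>{1..2*k+1}. CC j) - real (2*k+1) *\<^sub>R zz) + (AA 1 - BB 1) - (arcv 1 (2*k+1) - (zz + BB 1 + AA 1))) \<in> RR"
    by (rule RR_mul)
  moreover have "(1/2::real) *\<^sub>R (((\<Sum>j\<in>{1..2*k+1}. CC j) - real (2*k+1) *\<^sub>R zz) + (AA 1 - BB 1) - (arcv 1 (2*k+1) - (zz + BB 1 + AA 1))) = AA 1 - real k *\<^sub>R zz"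
    unfolding arc_full by (simp add: algebra_simps scaleR_2[symmetric])
  ultimately show ?thesis by simp
qed

lemma aK_RR: "i \<in> {1..2*k+1} \<Longrightarrow> AA i - real k *\<^sub>R zz \<in> RR"
proof -
  assume i: "i \<in> {1..2*k+1}"
  have "(AA i - AA 1) + (AA 1 - real k *\<^sub>R zz) \<in> RR" using a_RR[OF i] a1_RR by (rule RR_add)
  then show ?thesis by simp
qed

lemma bK_RR: "i \<in> {1..2*k+1} \<Longrightarrow> BB i - real k *\<^sub>R zz \<in> RR"
proof -
  assume i: "i \<in> {1..2*k+1}"
  have "(AA i - real k *\<^sub>R zz) - (AA i - BB i) \<in> RR" using aK_RR[OF i] d_RR[OF i] by (rule RR_diff)
  then show ?thesis by simp
qed

end

context lsetup begin

lemma arcv_eq: "1 \<le> a \<Longrightarrow> b \<le> 2*k+1 \<Longrightarrow> arcv a b = E {v a, v b} + (\<Sum>j\<in>{a..<b}. CC j)"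
  unfolding arcv_def using arc_sum by simp

lemma chord_even:
  assumes ab: "1 \<le> a" "a < b" "b \<le> 2*k+1" "even (b - a)"
  shows "E {v a, v b} - real (ell k a b) *\<^sub>R zz \<in> RR"
proof -
  have t1: "arcv a b \<in> TV" unfolding arcv_def by (rule arc_TV[OF ab])
  have t2: "arcv 1 (2*k+1) \<in> TV" unfolding arcv_def by (rule arc_TV) (use k1 in auto)
  have X: "arcv a b - arcv 1 (2*k+1) \<in> RR" by (rule TV_diff[OF t1 t2])
  have Y: "(\<Sum>j\<in>{a..<b}. CC j) - real (b - a) *\<^sub>R zz \<in> RR" using sumC_RR[OF ab(1) ab(3)] .
  have "(arcv a b - arcv 1 (2*k+1)) - ((\<Sum>j\<in>{a..<b}. CC j) - real (b - a) *\<^sub>R zz)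
        + ((\<Sum>j\<in>{1..2*k+1}. CC j) - real (2*k+1) *\<^sub>R zz) \<in> RR"
    by (rule RR_add[OF RR_diff[OF X Y] sumC_full_RR])
  moreover have "ell k a b = 2*k+1 - (b - a)" using ab by (simp add: ell_def Let_def)
  then have hell: "real (ell k a b) = real (2*k+1) - real (b - a)" using ab by simp
  moreover have "(arcv a b - arcv 1 (2*k+1)) - ((\<Sum>j\<in>{a..<b}. CC j) - real (b - a) *\<^sub>R zz)
        + ((\<Sum>j\<in>{1..2*k+1}. CC j) - real (2*k+1) *\<^sub>R zz) = E {v a, v b} - real (ell k a b) *\<^sub>R zz"
    unfolding arcv_eq[OF ab(1) ab(3)] arc_full hell by (simp add: vec_eq_iff algebra_simps)
  ultimately show ?thesis by simp
qed

lemma chord_odd: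
  assumes ab: "1 \<le> a" "a < b" "b \<le> 2*k+1" "odd (b - a)"
  shows "E {v a, v b} - real (b - a) *\<^sub>R zz \<in> RR"
proof (cases "b < 2*k+1")
  case True
  have r: "a \<in> {1..2*k+1}" "b \<in> {1..2*k+1}" "Suc b \<in> {1..2*k+1}" using ab True by auto
  have w1: "w {v a, v b} = b - a" using w_vv[OF r(1) r(2)] ab by (simp add: ell_def Let_def)
  have w2: "w {v b, v (Suc b)} = 1" using w_vv[OF r(2) r(3)] by (simp add: ell_def Let_def)
  have e3: "ell k a (Suc b) = 2*k+1 - (Suc b - a)" using ab True by (simp add: ell_def Let_def)
  have w3: "w {v a, v (Suc b)} = ell k a (Suc b)" using w_vv[OF r(1) r(3)] ab by simp
  have tri: "E {v a, v b} + E {v b, v (Suc b)} + E {v a, v (Suc b)} \<in> TV"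
    by (rule tri_TV) (use r ab v_eq_iff w1 w2 w3 e3 True in auto)
  have cb: "E {v b, v (Suc b)} = CC b" using True by (simp add: CC_def nx_def)
  have Y: "(E {v a, v b} + E {v b, v (Suc b)} + E {v a, v (Suc b)}) - (zz + BB 1 + AA 1) \<in> RR"
    by (rule TV_diff[OF tri T_TV]) auto
  have ev: "E {v a, v (Suc b)} - real (ell k a (Suc b)) *\<^sub>R zz \<in> RR"
    by (rule chord_even) (use ab True in auto)
  have a1: "AA 1 - real k *\<^sub>R zz \<in> RR" by (rule aK_RR) auto
  have b1: "BB 1 - real k *\<^sub>R zz \<in> RR" by (rule bK_RR) auto
  have "(E {v a, v b} + E {v b, v (Suc b)} + E {v a, v (Suc b)}) - (zz + BB 1 + AA 1)
      - (CC b - zz) - (E {v a, v (Suc b)} - real (ell k a (Suc b)) *\<^sub>R zz)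
      + (AA 1 - real k *\<^sub>R zz) + (BB 1 - real k *\<^sub>R zz) \<in> RR"
    by (rule RR_add[OF RR_add[OF RR_diff[OF RR_diff[OF Y c_RR] ev] a1] b1]) (use True r in auto)
  moreover have hc: "real (ell k a (Suc b)) = 2 * real k - real (b - a)" using e3 ab True by simp
  moreover have "(E {v a, v b} + E {v b, v (Suc b)} + E {v a, v (Suc b)}) - (zz + BB 1 + AA 1)
      - (CC b - zz) - (E {v a, v (Suc b)} - real (ell k a (Suc b)) *\<^sub>R zz)
      + (AA 1 - real k *\<^sub>R zz) + (BB 1 - real k *\<^sub>R zz) = E {v a, v b} - real (b - a) *\<^sub>R zz"
    unfolding cb hc by (simp add: vec_eq_iff algebra_simps)
  ultimately show ?thesis by simp
next
  case False
  then have bN: "b = 2*k+1" using ab by simp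
  then have "even a" using ab by auto
  then have a2: "2 \<le> a" using ab by (cases "a = 1") auto
  have r: "a - 1 \<in> {1..2*k+1}" "a \<in> {1..2*k+1}" "b \<in> {1..2*k+1}" using ab a2 by auto
  have w1: "w {v (a - 1), v a} = 1" using w_vv[OF r(1) r(2)] a2 by (simp add: ell_def Let_def)
  have e2: "ell k a b = b - a" using ab by (simp add: ell_def Let_def)
  have w2: "w {v a, v b} = b - a" using w_vv[OF r(2) r(3)] ab e2 by simp
  have e3: "ell k (a - 1) b = a - 1" using ab a2 bN by (simp add: ell_def Let_def)
  have w3: "w {v (a - 1), v b} = a - 1" using w_vv[OF r(1) r(3)] ab a2 e3 by simp
  have tri: "E {v (a - 1), v a} + E {v a, v b} + E {v (a - 1), v b} \<in> TV"
    by (rule tri_TV) (use r ab a2 v_eq_iff w1 w2 w3 bN in auto)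
  have "nx (a - 1) = a" using ab a2 by (auto simp: nx_def)
  then have ca: "E {v (a - 1), v a} = CC (a - 1)" by (simp add: CC_def)
  have Y: "(E {v (a - 1), v a} + E {v a, v b} + E {v (a - 1), v b}) - (zz + BB 1 + AA 1) \<in> RR"
    by (rule TV_diff[OF tri T_TV]) auto
  have ev: "E {v (a - 1), v b} - real (ell k (a - 1) b) *\<^sub>R zz \<in> RR"
    by (rule chord_even) (use ab a2 bN in auto)
  have a1: "AA 1 - real k *\<^sub>R zz \<in> RR" by (rule aK_RR) auto
  have b1: "BB 1 - real k *\<^sub>R zz \<in> RR" by (rule bK_RR) auto
  have "(E {v (a - 1), v a} + E {v a, v b} + E {v (a - 1), v b}) - (zz + BB 1 + AA 1)
      - (CC (a - 1) - zz) - (E {v (a - 1), v b} - real (ell k (a - 1) b) *\<^sub>R zz)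
      + (AA 1 - real k *\<^sub>R zz) + (BB 1 - real k *\<^sub>R zz) \<in> RR" (is "?M \<in> RR")
    by (rule RR_add[OF RR_add[OF RR_diff[OF RR_diff[OF Y c_RR] ev] a1] b1]) (use r in auto)
  moreover have h1: "real (ell k (a - 1) b) = real a - 1" using e3 a2 by simp
  moreover have h2: "real (b - a) = 2 * real k + 1 - real a" using ab bN by simp
  moreover have "(E {v (a - 1), v a} + E {v a, v b} + E {v (a - 1), v b}) - (zz + BB 1 + AA 1)
      - (CC (a - 1) - zz) - (E {v (a - 1), v b} - real (ell k (a - 1) b) *\<^sub>R zz)
      + (AA 1 - real k *\<^sub>R zz) + (BB 1 - real k *\<^sub>R zz) = E {v a, v b} - real (b - a) *\<^sub>R zz"
    unfolding ca h1 h2 by (simp add: vec_eq_iff algebra_simps)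
  ultimately show ?thesis by (metis (no_types, lifting))
qed

lemma chord_lt:
  assumes ab: "1 \<le> a" "a < b" "b \<le> 2*k+1"
  shows "E {v a, v b} - real (ell k a b) *\<^sub>R zz \<in> RR"
proof (cases "even (b - a)")
  case True then show ?thesis using chord_even ab by simp
next
  case False
  then have "ell k a b = b - a" using ab by (simp add: ell_def Let_def)
  then show ?thesis using chord_odd[OF ab False] by simp
qed

lemma edge_RR:
  assumes f: "f \<in> Kn_edges"
  shows "E f - w f *\<^sub>R zz \<in> RR"
proof -
  from f obtain x y where e: "f = {x,y}" "x \<noteq> y" by (auto simp: Kn_edges_def card_2_iff)
  have z0: "0 \<in> RR" unfolding RR_def by (rule span_zero)
  show ?thesis
  proof (rule vert_cases[of x]; rule vert_cases[of y])
    fix i j assume h: "i \<in> {1..2*k+1}" "j \<in> {1..2*k+1}" "x = v i" "y = v j"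
    then have ij: "i \<noteq> j" using e by auto
    show ?thesis
    proof (cases "i < j")
      case True
      then show ?thesis using chord_lt[of i j] h e w_vv[OF h(1) h(2) ij] by auto
    next
      case False
      then have "j < i" using ij by simp
      then show ?thesis using chord_lt[of j i] h e w_vv[OF h(1) h(2) ij] ell_sym[of i j]
        by (auto simp: insert_commute)
    qed
  next
    fix i assume h: "x = s" "i \<in> {1..2*k+1}" "y = v i"
    then show ?thesis using aK_RR[OF h(2)] w_sv[OF h(2)] e by (simp add: AA_def)
  next
    fix i assume h: "x = t" "i \<in> {1..2*k+1}" "y = v i"
    then show ?thesis using bK_RR[OF h(2)] w_sv[OF h(2)] e by (simp add: BB_def)
  next
    fix i assume h: "i \<in> {1..2*k+1}" "x = v i" "y = s"
    then show ?thesis using aK_RR[OF h(1)] w_sv[OF h(1)] e by (simp add: AA_def insert_commute)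
  next
    fix i assume h: "i \<in> {1..2*k+1}" "x = v i" "y = t"
    then show ?thesis using bK_RR[OF h(1)] w_sv[OF h(1)] e by (simp add: BB_def insert_commute)
  qed (use e z0 w_st in \<open>auto simp: zz_def insert_commute\<close>)
qed

lemma key_RR: "Bsp \<subseteq> RR"
proof
  fix y assume "y \<in> Bsp"
  then have yL: "\<And>e. e \<notin> Kn_edges \<Longrightarrow> y $ e = 0" and y0: "wv \<bullet> y = 0"
    by (auto simp: Bsp_def L_def)
  have "y = (\<Sum>e\<in>UNIV. y $ e *\<^sub>R E e)" by (rule vec_decomp)
  also have "\<dots> = (\<Sum>e\<in>Kn_edges. y $ e *\<^sub>R E e)"
    by (rule sum.mono_neutral_right) (auto simp: yL)
  finally have y1: "y = (\<Sum>e\<in>Kn_edges. y $ e *\<^sub>R E e)" .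
  have "wv \<bullet> y = (\<Sum>e\<in>UNIV. w e * y $ e)" by (simp add: inner_vec_def wv_def)
  also have "\<dots> = (\<Sum>e\<in>Kn_edges. w e * y $ e)"
    by (rule sum.mono_neutral_right) (auto simp: yL)
  finally have y2: "(\<Sum>e\<in>Kn_edges. y $ e * w e) = 0" using y0 by (simp add: mult.commute)
  have "(\<Sum>e\<in>Kn_edges. y $ e *\<^sub>R (E e - w e *\<^sub>R zz)) = (\<Sum>e\<in>Kn_edges. y $ e *\<^sub>R E e) - (\<Sum>e\<in>Kn_edges. y $ e * w e) *\<^sub>R zz"
    by (simp add: scaleR_diff_right sum_subtractf scaleR_sum_left)
  then have "y = (\<Sum>e\<in>Kn_edges. y $ e *\<^sub>R (E e - w e *\<^sub>R zz))" using y1 y2 by simp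
  moreover have "(\<Sum>e\<in>Kn_edges. y $ e *\<^sub>R (E e - w e *\<^sub>R zz)) \<in> RR"
    by (rule RR_sum, rule RR_mul, rule edge_RR)
  ultimately show "y \<in> RR" by simp
qed

end
context lsetup begin

lemma facet: "{x \<in> (P_odd_up :: (real ^ ('v set)) set). lhs x = real (2*k+1)} facet_of P_odd_up"
proof -
  let ?P = "P_odd_up :: (real ^ ('v set)) set"
  let ?F = "{x \<in> ?P. lhs x = real (2*k+1)}"
  have F: "?F = ?P \<inter> {x. wv \<bullet> x = real (2*k+1)}" by (auto simp: lhs_inner)
  have face: "?F face_of ?P" unfolding F
    by (rule face_of_Int_supporting_hyperplane_ge[OF convex_P]) (rule valid_up)
  have TVF: "TV \<subseteq> ?F" unfolding TV_def using chi_in_P by auto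
  have ne: "?F \<noteq> {}" using TVF c0_TV by auto
  have stK: "{s,t} \<in> Kn_edges" using st by (simp add: Kn_edges_def)
  have "c0 + E {s,t} \<in> ?P" unfolding c0_def using chi_plus_in_P[OF T0_cycle stK] .
  moreover have "lhs (c0 + E {s,t}) = real (2*k+1) + 1"
    using c0_TV w_st by (auto simp: TV_def lhs_add w_def[symmetric])
  ultimately have neq: "?F \<noteq> ?P" by force
  have lt: "aff_dim ?F < aff_dim ?P" by (rule face_of_aff_dim_lt[OF convex_P face neq])
  have "aff_dim ?P \<le> aff_dim L" by (rule aff_dim_subset[OF P_sub_L])
  also have "\<dots> = int (dim L)" by (rule aff_dim_subspace[OF subspace_L])
  finally have PL: "aff_dim ?P \<le> int (dim L)" .
  have "L \<subseteq> span (insert (E {s,t}) Bsp)"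
  proof
    fix y assume y: "y \<in> L"
    have EL: "E {s,t} \<in> L" using stK by (auto simp: L_def E_nth)
    have "wv \<bullet> E {s,t} = 1" using w_st by (simp add: lhs_inner[symmetric] w_def)
    then have "y - (wv \<bullet> y) *\<^sub>R E {s,t} \<in> Bsp"
      using y EL subspace_L by (auto simp: Bsp_def inner_diff_right subspace_diff subspace_mul)
    then have "(y - (wv \<bullet> y) *\<^sub>R E {s,t}) + (wv \<bullet> y) *\<^sub>R E {s,t} \<in> span (insert (E {s,t}) Bsp)"
      by (intro span_add span_mul) (auto intro: span_base)
    then show "y \<in> span (insert (E {s,t}) Bsp)" by simp
  qed
  then have "dim L \<le> dim (insert (E {s,t}) Bsp)" by (rule dim_mono)
  also have "\<dots> \<le> dim Bsp + 1" by (simp add: dim_insert)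
  finally have LB: "dim L \<le> dim Bsp + 1" .
  have b1: "dim Bsp \<le> dim ((+) (- c0) ` TV)" by (rule dim_mono[OF key_RR[unfolded RR_def]])
  have b2: "aff_dim TV = int (dim ((+) (- c0) ` TV))" by (rule aff_dim_eq_dim) (rule hull_inc[OF c0_TV])
  have b3: "aff_dim TV \<le> aff_dim ?F" by (rule aff_dim_subset[OF TVF])
  have BF: "int (dim Bsp) \<le> aff_dim ?F" using b1 b2 b3 by linarith
  have "aff_dim ?F = aff_dim ?P - 1" using lt PL LB BF by linarith
  then show ?thesis unfolding facet_of_def using face ne by blast
qed

end

theorem lemma6:
  fixes v :: "nat \<Rightarrow> 'v::finite" and s t :: 'v and k :: nat
  assumes "odd CARD('v)" and "CARD('v) \<ge> 5"
    and "k = (CARD('v) - 3) div 2"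
    and "inj_on v {1..2*k+1}"
    and "s \<notin> v ` {1..2*k+1}" and "t \<notin> v ` {1..2*k+1}" and "s \<noteq> t"
  shows "(\<forall>x\<in>(P_odd_up :: (real ^ ('v set)) set). C_lhs k v s t x \<ge> real (2*k+1))
    \<and> {x \<in> (P_odd_up :: (real ^ ('v set)) set). C_lhs k v s t x = real (2*k+1)} facet_of P_odd_up"
proof -
  have c: "CARD('v) = 2*k+3" using assms(1-3) by presburger
  have k1: "k \<ge> 1" using assms(2,3) by simp
  interpret lsetup k v s t
    by unfold_locales (use c k1 assms in auto)
  show ?thesis
    using valid_up facet by (auto simp: lhs_inner[symmetric] lhs_def)
qed

end
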